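(* Let $X$ be a locally compact Hausdorff space and $\zeta$ a quasi-integral on $X$. Then the set function $\tau_\zeta:\mathcal A(X)\to[0,\infty)$ defined by $$\tau_\zeta(K)=\inf\{\zeta(f)\mid f\in C_c(X),\ f\ge \mathbf 1_K\},\qquad \tau_\zeta(O)=\sup\{\zeta(f)\mid f\in C_c(X),\ f\le \mathbf 1_O\}$$ ($K\in\mathcal K(X)$, $O\in\mathcal O(X)$) is a topological measure on $X$.
   Context: $C_c(X)$: continuous real functions with compact support, uniform norm; $\mathbf 1_A$: indicator function. A quasi-integral on $X$ is a functional $\eta:C_c(X)\to\mathbb R$ such that: (i) $\eta(f)\le\eta(g)$ whenever $f\le g$; (ii) for every compact $K\subset X$ there is $N_K\ge0$ with $|\eta(f)-\eta(g)|\le N_K\|f-g\|$ for all $f,g$ supported in $K$; (iii) for every $f\in C_c(X)$, $\eta$ is linear on $\{\phi\circ f\mid \phi\in C(\mathbb R),\ \phi(0)=0\}$. $\mathcal K(X)$: compact subsets; $\mathcal O(X)$: open subsets with compact closure; $\mathcal A(X)=\mathcal K(X)\cup\mathcal O(X)$. A topological measure is $\tau:\mathcal A(X)\to[0,\infty)$ with: (additivity) $\tau(A\cup A')=\tau(A)+\tau(A')$ for disjoint $A,A'\in\mathcal A(X)$ with $A\cup A'\in\mathcal A(X)$; (monotonicity) $\tau(A)\le\tau(A')$ for $A\subset A'$; (regularity) $\tau(K)=\inf\{\tau(O)\mid O\in\mathcal O(X),O\supset K\}$ and $\tau(O)=\sup\{\tau(K)\mid K\in\mathcal K(X),K\subset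 O\}$. *)

theory Defs
  imports "HOL-Analysis.Analysis"
begin

definition tsupp :: "('a::topological_space \<Rightarrow> real) \<Rightarrow> 'a set" where
  "tsupp f = closure {x. f x \<noteq> 0}"

definition Cc :: "('a::topological_space \<Rightarrow> real) set" where
  "Cc = {f. continuous_on UNIV f \<and> compact (tsupp f)}"

definition unorm_dist :: "('a \<Rightarrow> real) \<Rightarrow> ('a \<Rightarrow> real) \<Rightarrow> real" where
  "unorm_dist f g = (SUP x. \<bar>f x - g x\<bar>)"

definition quasi_integral :: "(('a::topological_space \<Rightarrow> real) \<Rightarrow> real) \<Rightarrow> bool" where
  "quasi_integral \<eta> \<longleftrightarrow>
     (\<forall>f\<in>Cc. \<forall>g\<in>Cc. f \<le> g \<longrightarrow> \<eta> f \<le> \<eta> g) \<and>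
     (\<forall>K. compact K \<longrightarrow> (\<exists>N\<ge>0. \<forall>f\<in>Cc. \<forall>g\<in>Cc. tsupp f \<subseteq> K \<longrightarrow> tsupp g \<subseteq> K \<longrightarrow>
          \<bar>\<eta> f - \<eta> g\<bar> \<le> N * unorm_dist f g)) \<and>
     (\<forall>f\<in>Cc. \<forall>\<phi> \<psi> (a::real) (b::real).
          continuous_on UNIV \<phi> \<and> \<phi> 0 = 0 \<and> continuous_on UNIV \<psi> \<and> \<psi> 0 = 0 \<longrightarrow>
          \<eta> (\<lambda>x. a * \<phi> (f x) + b * \<psi> (f x)) = a * \<eta> (\<phi> \<circ> f) + b * \<eta> (\<psi> \<circ> f))"

definition OX :: "'a::topological_space set set" where
  "OX = {U. open U \<and> compact (closure U)}"

definition AX :: "'a::topological_space set set" where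
  "AX = {K. compact K} \<union> OX"

definition topological_measure :: "('a::topological_space set \<Rightarrow> real) \<Rightarrow> bool" where
  "topological_measure \<tau> \<longleftrightarrow>
     (\<forall>A\<in>AX. 0 \<le> \<tau> A) \<and>
     (\<forall>A\<in>AX. \<forall>A'\<in>AX. A \<inter> A' = {} \<longrightarrow> A \<union> A' \<in> AX \<longrightarrow> \<tau> (A \<union> A') = \<tau> A + \<tau> A') \<and>
     (\<forall>A\<in>AX. \<forall>A'\<in>AX. A \<subseteq> A' \<longrightarrow> \<tau> A \<le> \<tau> A') \<and>
     (\<forall>K. compact K \<longrightarrow> \<tau> K = Inf {\<tau> U | U. U \<in> OX \<and> K \<subseteq> U}) \<and>
     (\<forall>U\<in>OX. \<tau> U = Sup {\<tau> K | K. compact K \<and> K \<subseteq> U})"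

text \<open>The set function tau_zeta. On sets that are both compact and open the two
  formulas of the paper agree; we use the compact-set formula there.\<close>
definition tau_of :: "(('a::topological_space \<Rightarrow> real) \<Rightarrow> real) \<Rightarrow> 'a set \<Rightarrow> real" where
  "tau_of \<zeta> A = (if compact A then Inf {\<zeta> f | f. f \<in> Cc \<and> indicator A \<le> f}
                  else Sup {\<zeta> f | f. f \<in> Cc \<and> f \<le> indicator A})"

end

theory Submission
  imports Defs
begin
lemma Hausdorff_t2: "Hausdorff_space (euclidean :: 'a::t2_space topology)"
  unfolding Hausdorff_space_def disjnt_def by (simp add: separation_t2)

lemma tsupp_mono_nz:
  assumes "\<And>x. f x \<noteq> 0 \<Longrightarrow> g x \<noteq> 0"
  shows "tsupp f \<subseteq> tsupp g"
  unfolding tsupp_def using assms by (intro closure_mono) auto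

lemma nz_in_tsupp: "f x \<noteq> 0 \<Longrightarrow> x \<in> tsupp f"
  unfolding tsupp_def using closure_subset[of "{x. f x \<noteq> 0}"] by auto

lemma Cc_I:
  assumes "continuous_on UNIV f" "compact K" "\<And>x. f x \<noteq> 0 \<Longrightarrow> x \<in> K"
  shows "f \<in> (Cc :: ('a::t2_space \<Rightarrow> real) set)"
proof -
  have "tsupp f \<subseteq> K" unfolding tsupp_def
    using assms by (intro closure_minimal) (auto intro: compact_imp_closed)
  then have "compact (tsupp f)"
    using assms(2) compact_Int_closed[of K "tsupp f"] unfolding tsupp_def
    by (metis closed_closure inf.absorb_iff2)
  then show ?thesis using assms unfolding Cc_def by auto
qed

lemma Cc_cont: "f \<in> Cc \<Longrightarrow> continuous_on UNIV f"
  unfolding Cc_def by auto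
lemma Cc_compact: "f \<in> Cc \<Longrightarrow> compact (tsupp f)"
  unfolding Cc_def by auto

lemma Cc_zero: "(\<lambda>x. 0) \<in> (Cc :: ('a::t2_space \<Rightarrow> real) set)"
  by (rule Cc_I[where K="{}"]) auto

lemma Cc_comp:
  assumes "f \<in> (Cc :: ('a::t2_space \<Rightarrow> real) set)" "continuous_on UNIV \<phi>" "\<phi> 0 = 0"
  shows "(\<lambda>x. \<phi> (f x)) \<in> Cc"
proof (rule Cc_I[where K="tsupp f"])
  show "continuous_on UNIV (\<lambda>x. \<phi> (f x))"
    using assms Cc_cont continuous_on_compose2[of UNIV \<phi> UNIV f] by auto
  show "compact (tsupp f)" using assms Cc_compact by auto
  fix x assume "\<phi> (f x) \<noteq> 0" then have "f x \<noteq> 0" using assms by auto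
  then show "x \<in> tsupp f" by (rule nz_in_tsupp)
qed

lemma Cc_bin:
  assumes "f \<in> (Cc :: ('a::t2_space \<Rightarrow> real) set)" "g \<in> Cc"
    and "continuous_on UNIV (\<lambda>p. \<phi> (fst p) (snd p))" "\<phi> 0 0 = 0"
  shows "(\<lambda>x. \<phi> (f x) (g x)) \<in> Cc"
proof (rule Cc_I[where K="tsupp f \<union> tsupp g"])
  have "continuous_on UNIV (\<lambda>x. (f x, g x))"
    using assms Cc_cont by (intro continuous_intros) auto
  then show "continuous_on UNIV (\<lambda>x. \<phi> (f x) (g x))"
    using continuous_on_compose2[OF assms(3) \<open>continuous_on UNIV (\<lambda>x. (f x, g x))\<close>] by auto
  show "compact (tsupp f \<union> tsupp g)" using assms Cc_compact by auto
  fix x assume "\<phi> (f x) (g x) \<noteq> 0" then have "f x \<noteq> 0 \<or> g x \<noteq> 0" using assms by auto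
  then show "x \<in> tsupp f \<union> tsupp g" using nz_in_tsupp by blast
qed

lemma Cc_add: "f \<in> Cc \<Longrightarrow> g \<in> Cc \<Longrightarrow> (\<lambda>x. f x + g x) \<in> (Cc :: ('a::t2_space \<Rightarrow> real) set)"
  by (rule Cc_bin[where \<phi>="\<lambda>a b. a + b"]) (simp_all add: continuous_on_add continuous_on_fst continuous_on_snd continuous_on_id)
lemma Cc_diff: "f \<in> Cc \<Longrightarrow> g \<in> Cc \<Longrightarrow> (\<lambda>x. f x - g x) \<in> (Cc :: ('a::t2_space \<Rightarrow> real) set)"
  by (rule Cc_bin[where \<phi>="\<lambda>a b. a - b"]) (simp_all add: continuous_on_diff continuous_on_fst continuous_on_snd continuous_on_id)
lemma Cc_min: "f \<in> Cc \<Longrightarrow> g \<in> Cc \<Longrightarrow> (\<lambda>x. min (f x) (g x)) \<in> (Cc :: ('a::t2_space \<Rightarrow> real) set)"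
  by (rule Cc_bin[where \<phi>="\<lambda>a b. min a b"]) (simp_all add: continuous_on_min continuous_on_fst continuous_on_snd continuous_on_id)
lemma Cc_scale: "f \<in> Cc \<Longrightarrow> (\<lambda>x. c * f x) \<in> (Cc :: ('a::t2_space \<Rightarrow> real) set)"
  by (rule Cc_comp[where \<phi>="\<lambda>t. c * t"]) (simp_all add: continuous_on_mult_left continuous_on_id)

lemma urysohn_Cc:
  fixes K U :: "'a::t2_space set"
  assumes LC: "locally_compact_space (euclidean::'a topology)"
    and K: "compact K" and U: "open U" and KU: "K \<subseteq> U"
  obtains V L and g :: "'a \<Rightarrow> real" where "open V" "compact L" "K \<subseteq> V" "V \<subseteq> L" "L \<subseteq> U"
    "g \<in> Cc" "\<And>x. 0 \<le> g x" "\<And>x. g x \<le> 1" "\<And>x. x \<in> K \<Longrightarrow> g x = 1"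
    "\<And>x. g x \<noteq> 0 \<Longrightarrow> x \<in> V"
proof -
  have H: "Hausdorff_space (euclidean::'a topology)" by (rule Hausdorff_t2)
  obtain V0 L0 where V0: "open V0" "compact L0" "K \<subseteq> V0" "V0 \<subseteq> L0"
    using locally_compact_space_compact_closed_compact[OF disjI1[OF H]] LC K
    by (metis compactin_euclidean_iff open_openin)
  have "compact (L0 - U)" using V0 U by (simp add: compact_diff)
  moreover have "disjnt K (L0 - U)" using KU by (auto simp: disjnt_def)
  ultimately obtain A B where AB: "open A" "open B" "K \<subseteq> A" "L0 - U \<subseteq> B" "disjnt A B"
    using H K unfolding Hausdorff_space_compact_sets
    by (metis compactin_euclidean_iff open_openin)
  define V where "V = V0 \<inter> A"
  define L where "L = L0 - B"
  have oV: "open V" using V0 AB by (simp add: V_def open_Int)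
  have cL: "compact L" using V0 AB by (simp add: L_def compact_diff)
  have KV: "K \<subseteq> V" using V0 AB by (auto simp: V_def)
  have VL: "V \<subseteq> L" using V0 AB by (auto simp: V_def L_def disjnt_def)
  have LU: "L \<subseteq> U" using AB by (auto simp: L_def)
  have CR: "completely_regular_space (euclidean::'a topology)"
    by (rule locally_compact_regular_imp_completely_regular_space[OF LC disjI1[OF H]])
  obtain f where f: "continuous_map euclidean (top_of_set {0::real..1}) f"
      "f ` (- V) \<subseteq> {0}" "f ` K \<subseteq> {1}"
    using Urysohn_completely_regular_compact_closed[of 0 1 euclidean K "- V"] CR K oV KV
    by (auto simp: disjnt_def closed_closedin[symmetric])
  have fc: "continuous_on UNIV f" and fr: "\<And>x. f x \<in> {0..1}"
    using f(1) unfolding continuous_map_in_subtopology by auto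
  have fV: "\<And>x. f x \<noteq> 0 \<Longrightarrow> x \<in> V" using f(2) by auto
  have "f \<in> Cc" by (rule Cc_I[OF fc cL]) (use fV VL in auto)
  show thesis
    by (rule that[OF oV cL KV VL LU \<open>f \<in> Cc\<close>]) (use fr f(3) fV in auto)
qed

definition lam :: "(('a::topological_space \<Rightarrow> real) \<Rightarrow> real) \<Rightarrow> 'a set \<Rightarrow> real" where
  "lam \<zeta> A = Inf {\<zeta> f | f. f \<in> Cc \<and> indicator A \<le> f}"
definition mu :: "(('a::topological_space \<Rightarrow> real) \<Rightarrow> real) \<Rightarrow> 'a set \<Rightarrow> real" where
  "mu \<zeta> A = Sup {\<zeta> f | f. f \<in> Cc \<and> f \<le> indicator A}"

lemma tau_of_eq: "tau_of \<zeta> A = (if compact A then lam \<zeta> A else mu \<zeta> A)"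
  unfolding tau_of_def lam_def mu_def by simp

context
  fixes \<zeta> :: "('a::t2_space \<Rightarrow> real) \<Rightarrow> real"
  assumes QI: "quasi_integral \<zeta>"
begin

lemma Zmono: "f \<in> Cc \<Longrightarrow> g \<in> Cc \<Longrightarrow> (\<And>x. f x \<le> g x) \<Longrightarrow> \<zeta> f \<le> \<zeta> g"
  using QI unfolding quasi_integral_def by (auto simp: le_fun_def)

lemma Zlin:
  assumes "f \<in> Cc" "continuous_on UNIV \<phi>" "\<phi> 0 = 0" "continuous_on UNIV \<psi>" "\<psi> 0 = 0"
  shows "\<zeta> (\<lambda>x. a * \<phi> (f x) + b * \<psi> (f x)) = a * \<zeta> (\<lambda>x. \<phi> (f x)) + b * \<zeta> (\<lambda>x. \<psi> (f x))"
proof -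
  have "\<zeta> (\<lambda>x. a * \<phi> (f x) + b * \<psi> (f x)) = a * \<zeta> (\<phi> \<circ> f) + b * \<zeta> (\<psi> \<circ> f)"
  proof -
    have L: "\<forall>f\<in>Cc. \<forall>\<phi> \<psi> (a::real) (b::real).
          continuous_on UNIV \<phi> \<and> \<phi> 0 = 0 \<and> continuous_on UNIV \<psi> \<and> \<psi> 0 = 0 \<longrightarrow>
          \<zeta> (\<lambda>x. a * \<phi> (f x) + b * \<psi> (f x)) = a * \<zeta> (\<phi> \<circ> f) + b * \<zeta> (\<psi> \<circ> f)"
      using QI unfolding quasi_integral_def by (elim conjE)
    show ?thesis using L assms(1) assms(2-5) by (elim ballE allE impE) auto
  qed
  then show ?thesis by (simp add: o_def)
qed

lemma Z0: "\<zeta> (\<lambda>x. 0) = 0"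
  using Zlin[OF Cc_zero, of "\<lambda>t. t" "\<lambda>t. t" 0 0] by (simp add: continuous_on_id)

lemma Zhom: "f \<in> Cc \<Longrightarrow> \<zeta> (\<lambda>x. c * f x) = c * \<zeta> f"
  using Zlin[of f "\<lambda>t. t" "\<lambda>t. t" c 0] by (simp add: continuous_on_id)

lemma Zsum:
  assumes "f \<in> Cc" "continuous_on UNIV \<phi>" "\<phi> 0 = 0" "continuous_on UNIV \<psi>" "\<psi> 0 = 0"
  shows "\<zeta> (\<lambda>x. \<phi> (f x) + \<psi> (f x)) = \<zeta> (\<lambda>x. \<phi> (f x)) + \<zeta> (\<lambda>x. \<psi> (f x))"
  using Zlin[OF assms, of 1 1] by simp

lemma Znonneg: "f \<in> Cc \<Longrightarrow> (\<And>x. 0 \<le> f x) \<Longrightarrow> 0 \<le> \<zeta> f"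
  using Zmono[OF Cc_zero, of f] Z0 by auto

lemma Zdisj:
  assumes u: "u \<in> Cc" and v: "v \<in> Cc" and u0: "\<And>x. 0 \<le> u x" and v0: "\<And>x. 0 \<le> v x"
    and d: "\<And>x. u x = 0 \<or> v x = 0"
  shows "\<zeta> (\<lambda>x. u x + v x) = \<zeta> u + \<zeta> v"
proof -
  define h where "h = (\<lambda>x. u x - v x)"
  have h: "h \<in> Cc" unfolding h_def by (rule Cc_diff[OF u v])
  have c1: "continuous_on UNIV (\<lambda>t::real. max t 0)"
    by (intro continuous_on_max continuous_on_id continuous_on_const)
  have c2: "continuous_on UNIV (\<lambda>t::real. max (- t) 0)"
    by (intro continuous_on_max continuous_on_minus continuous_on_id continuous_on_const)
  have e1: "(\<lambda>x. max (h x) 0) = u"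
  proof
    fix x show "max (h x) 0 = u x" using u0[of x] v0[of x] d[of x] by (auto simp: h_def)
  qed
  have e2: "(\<lambda>x. max (- h x) 0) = v"
  proof
    fix x show "max (- h x) 0 = v x" using u0[of x] v0[of x] d[of x] by (auto simp: h_def)
  qed
  have e3: "(\<lambda>x. max (h x) 0 + max (- h x) 0) = (\<lambda>x. u x + v x)"
    using e1 e2 by (metis)
  show ?thesis
    using Zsum[OF h c1 _ c2, simplified] unfolding e1 e2 e3 by simp
qed

end

lemma ind_ge0: "0 \<le> (indicator A x :: real)" by (simp add: indicator_def)
lemma ind_le1: "(indicator A x :: real) \<le> 1" by (simp add: indicator_def)

context
  fixes \<zeta> :: "('a::t2_space \<Rightarrow> real) \<Rightarrow> real"
  assumes QI: "quasi_integral \<zeta>"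
begin

lemma lam_lower: "f \<in> Cc \<Longrightarrow> indicator A \<le> f \<Longrightarrow> lam \<zeta> A \<le> \<zeta> f"
  unfolding lam_def
proof (rule cInf_lower)
  assume "f \<in> Cc" "indicator A \<le> f"
  then show "\<zeta> f \<in> {\<zeta> f |f. f \<in> Cc \<and> indicator A \<le> f}" by auto
  show "bdd_below {\<zeta> f |f. f \<in> Cc \<and> indicator A \<le> f}"
  proof (rule bdd_belowI[of _ 0], clarify)
    fix g :: "'a \<Rightarrow> real" assume "g \<in> Cc" "indicator A \<le> g"
    then show "0 \<le> \<zeta> g" using Znonneg[OF QI, of g] ind_ge0[of A]
      by (metis le_fun_def order.trans)
  qed
qed

lemma lam_greatest:
  assumes "\<And>f. f \<in> Cc \<Longrightarrow> indicator A \<le> f \<Longrightarrow> c \<le> \<zeta> f" and "\<exists>f\<in>Cc. indicator A \<le> f"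
  shows "c \<le> lam \<zeta> A"
  unfolding lam_def using assms by (intro cInf_greatest) auto

lemma lam_nonneg: "\<exists>f\<in>Cc. indicator A \<le> f \<Longrightarrow> 0 \<le> lam \<zeta> A"
proof (rule lam_greatest)
  fix f :: "'a \<Rightarrow> real" assume "f \<in> Cc" "indicator A \<le> f"
  then show "0 \<le> \<zeta> f" using Znonneg[OF QI, of f] ind_ge0[of A]
    by (metis le_fun_def order.trans)
qed

lemma mu_upper:
  assumes "f \<in> Cc" "f \<le> indicator A" "e \<in> Cc" "indicator A \<le> e"
  shows "\<zeta> f \<le> mu \<zeta> A"
  unfolding mu_def
proof (rule cSup_upper)
  show "\<zeta> f \<in> {\<zeta> f |f. f \<in> Cc \<and> f \<le> indicator A}" using assms by auto
  show "bdd_above {\<zeta> f |f. f \<in> Cc \<and> f \<le> indicator A}"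
  proof (rule bdd_aboveI[of _ "\<zeta> e"], clarify)
    fix g :: "'a \<Rightarrow> real" assume "g \<in> Cc" "g \<le> indicator A"
    then show "\<zeta> g \<le> \<zeta> e" using Zmono[OF QI, of g e] assms
      by (metis le_fun_def order.trans)
  qed
qed

lemma mu_least:
  assumes "\<And>f. f \<in> Cc \<Longrightarrow> f \<le> indicator A \<Longrightarrow> \<zeta> f \<le> c"
  shows "mu \<zeta> A \<le> c"
  unfolding mu_def
proof (rule cSup_least)
  show "{\<zeta> f |f. f \<in> Cc \<and> f \<le> indicator A} \<noteq> {}"
    using Cc_zero ind_ge0[of A] by (auto simp: le_fun_def)
qed (use assms in auto)

lemma mu_nonneg: "e \<in> Cc \<Longrightarrow> indicator A \<le> e \<Longrightarrow> 0 \<le> mu \<zeta> A"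
  using mu_upper[OF Cc_zero _ , of A e] Z0[OF QI] ind_ge0[of A] by (auto simp: le_fun_def)

end

context
  fixes \<zeta> :: "('a::t2_space \<Rightarrow> real) \<Rightarrow> real"
  assumes QI: "quasi_integral \<zeta>"
    and LC: "locally_compact_space (euclidean::'a topology)"
begin

lemma cover_Cc: "compact D \<Longrightarrow> A \<subseteq> D \<Longrightarrow> \<exists>e\<in>Cc. indicator A \<le> (e::'a\<Rightarrow>real)"
proof -
  assume D: "compact D" "A \<subseteq> D"
  obtain V L and g :: "'a \<Rightarrow> real" where g: "open V" "compact L" "D \<subseteq> V" "V \<subseteq> L" "L \<subseteq> UNIV"
    "g \<in> Cc" "\<And>x. 0 \<le> g x" "\<And>x. g x \<le> 1" "\<And>x. x \<in> D \<Longrightarrow> g x = 1"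
    "\<And>x. g x \<noteq> 0 \<Longrightarrow> x \<in> V"
    by (rule urysohn_Cc[OF LC D(1) open_UNIV subset_UNIV]) blast
  have "indicator A \<le> g" using D g(7,9) by (auto simp: le_fun_def indicator_def)
  then show ?thesis using g by blast
qed

lemma lam_nonneg': "compact K \<Longrightarrow> 0 \<le> lam \<zeta> K"
  using lam_nonneg[OF QI] cover_Cc by blast

lemma mu_upper': "compact D \<Longrightarrow> A \<subseteq> D \<Longrightarrow> f \<in> Cc \<Longrightarrow> f \<le> indicator A \<Longrightarrow> \<zeta> f \<le> mu \<zeta> A"
  using mu_upper[OF QI] cover_Cc by blast

lemma mu_nonneg': "compact D \<Longrightarrow> A \<subseteq> D \<Longrightarrow> 0 \<le> mu \<zeta> A"
  using mu_nonneg[OF QI] cover_Cc by blast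

lemma lam_mono: "compact K' \<Longrightarrow> K \<subseteq> K' \<Longrightarrow> lam \<zeta> K \<le> lam \<zeta> K'"
proof -
  assume a: "compact K'" "K \<subseteq> K'"
  show ?thesis
  proof (rule lam_greatest[OF QI])
    fix f assume "f \<in> Cc" "indicator K' \<le> f"
    moreover have "indicator K \<le> (indicator K' :: 'a \<Rightarrow> real)"
      using a by (auto simp: le_fun_def indicator_def)
    ultimately show "lam \<zeta> K \<le> \<zeta> f" using lam_lower[OF QI] order.trans by blast
  qed (use cover_Cc a in blast)
qed

lemma mu_mono: "compact D \<Longrightarrow> U' \<subseteq> D \<Longrightarrow> U \<subseteq> U' \<Longrightarrow> mu \<zeta> U \<le> mu \<zeta> U'"
proof -
  assume a: "compact D" "U' \<subseteq> D" "U \<subseteq> U'"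
  show ?thesis
  proof (rule mu_least[OF QI])
    fix f assume "f \<in> Cc" "f \<le> indicator U"
    moreover have "indicator U \<le> (indicator U' :: 'a \<Rightarrow> real)"
      using a by (auto simp: le_fun_def indicator_def)
    ultimately show "\<zeta> f \<le> mu \<zeta> U'" using mu_upper'[OF a(1,2)] order.trans by blast
  qed
qed

lemma lam_le_mu:
  assumes K: "compact K" and U: "open U" "K \<subseteq> U" and D: "compact D" "U \<subseteq> D"
  shows "lam \<zeta> K \<le> mu \<zeta> U"
proof -
  obtain V L and g :: "'a \<Rightarrow> real" where g: "open V" "compact L" "K \<subseteq> V" "V \<subseteq> L" "L \<subseteq> U"
    "g \<in> Cc" "\<And>x. 0 \<le> g x" "\<And>x. g x \<le> 1" "\<And>x. x \<in> K \<Longrightarrow> g x = 1"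
    "\<And>x. g x \<noteq> 0 \<Longrightarrow> x \<in> V"
    by (rule urysohn_Cc[OF LC K U]) blast
  have i1: "indicator K \<le> g" using g(7,9) by (auto simp: le_fun_def indicator_def)
  have i2: "g \<le> indicator U"
  proof (rule le_funI)
    fix x show "g x \<le> indicator U x"
    proof (cases "g x = 0")
      case True then show ?thesis by (simp add: ind_ge0)
    next
      case False then have "x \<in> U" using g(10)[of x] g(4,5) by blast
      then show ?thesis using g(8)[of x] by simp
    qed
  qed
  have "lam \<zeta> K \<le> \<zeta> g" by (rule lam_lower[OF QI g(6) i1])
  moreover have "\<zeta> g \<le> mu \<zeta> U" by (rule mu_upper'[OF D g(6) i2])
  ultimately show ?thesis by linarith
qed

lemma mu_le_lam:
  assumes K: "compact K" and UK: "U \<subseteq> K"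
  shows "mu \<zeta> U \<le> lam \<zeta> K"
proof (rule lam_greatest[OF QI])
  fix g assume g: "g \<in> Cc" "indicator K \<le> g"
  show "mu \<zeta> U \<le> \<zeta> g"
  proof (rule mu_least[OF QI])
    fix f assume "f \<in> Cc" "f \<le> indicator U"
    moreover have "indicator U \<le> (indicator K :: 'a \<Rightarrow> real)"
      using UK by (auto simp: le_fun_def indicator_def)
    ultimately have "\<And>x. f x \<le> g x" using g(2) unfolding le_fun_def
      by (meson order.trans)
    then show "\<zeta> f \<le> \<zeta> g" using g(1) \<open>f \<in> Cc\<close> Zmono[OF QI] by blast
  qed
qed (use cover_Cc K in blast)

lemma lam_eq_mu_clopen:
  assumes K: "compact K" and "open K"
  shows "lam \<zeta> K = mu \<zeta> K"
proof -
  have cl: "closed K" using K by (rule compact_imp_closed)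
  have "continuous_on UNIV (indicator K :: 'a \<Rightarrow> real)"
  proof -
    have e: "(indicator K :: 'a \<Rightarrow> real) = (\<lambda>x. if x \<in> K then 1 else 0)"
      by (auto simp: indicator_def)
    have "continuous_on (K \<union> - K) (\<lambda>x. if x \<in> K then (1::real) else 0)"
      by (rule continuous_on_If) (use cl \<open>open K\<close> in auto)
    then show ?thesis unfolding e by simp
  qed
  then have i: "(indicator K :: 'a \<Rightarrow> real) \<in> Cc"
    by (rule Cc_I[OF _ K]) (auto simp: indicator_def split: if_splits)
  have "lam \<zeta> K \<le> \<zeta> (indicator K)" by (rule lam_lower[OF QI i]) simp
  moreover have "\<zeta> (indicator K) \<le> mu \<zeta> K" by (rule mu_upper'[OF K _ i]) auto
  moreover have "mu \<zeta> K \<le> lam \<zeta> K" by (rule mu_le_lam[OF K]) simp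
  ultimately show ?thesis by linarith
qed

end

lemma ind_le_iff: "(indicator A \<le> (f :: 'a \<Rightarrow> real)) \<longleftrightarrow> (\<forall>x. 0 \<le> f x) \<and> (\<forall>x\<in>A. 1 \<le> f x)"
proof
  assume a: "indicator A \<le> f"
  have "\<And>x. indicator A x \<le> f x" using a by (simp add: le_fun_def)
  then show "(\<forall>x. 0 \<le> f x) \<and> (\<forall>x\<in>A. 1 \<le> f x)"
    by (metis ind_ge0 indicator_simps(1) order.trans)
next
  assume a: "(\<forall>x. 0 \<le> f x) \<and> (\<forall>x\<in>A. 1 \<le> f x)"
  show "indicator A \<le> f"
  proof (rule le_funI)
    fix x show "indicator A x \<le> f x" using a by (cases "x \<in> A") auto
  qed
qed

lemma ind_ge_iff: "((f :: 'a \<Rightarrow> real) \<le> indicator A) \<longleftrightarrow> (\<forall>x. f x \<le> 1) \<and> (\<forall>x. x \<notin> A \<longrightarrow> f x \<le> 0)"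
proof
  assume a: "f \<le> indicator A"
  have "\<And>x. f x \<le> indicator A x" using a by (simp add: le_fun_def)
  then show "(\<forall>x. f x \<le> 1) \<and> (\<forall>x. x \<notin> A \<longrightarrow> f x \<le> 0)"
    by (metis ind_le1 indicator_simps(2) order.trans)
next
  assume a: "(\<forall>x. f x \<le> 1) \<and> (\<forall>x. x \<notin> A \<longrightarrow> f x \<le> 0)"
  show "f \<le> indicator A"
  proof (rule le_funI)
    fix x show "f x \<le> indicator A x" using a by (cases "x \<in> A") auto
  qed
qed

context
  fixes \<zeta> :: "('a::t2_space \<Rightarrow> real) \<Rightarrow> real"
  assumes QI: "quasi_integral \<zeta>"
    and LC: "locally_compact_space (euclidean::'a topology)"
begin

lemma lam_add:
  assumes K1: "compact K1" and K2: "compact K2" and dj: "K1 \<inter> K2 = {}"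
  shows "lam \<zeta> (K1 \<union> K2) = lam \<zeta> K1 + lam \<zeta> K2"
proof -
  have H: "Hausdorff_space (euclidean::'a topology)" by (rule Hausdorff_t2)
  obtain U1 U2 where U: "open U1" "open U2" "K1 \<subseteq> U1" "K2 \<subseteq> U2" "disjnt U1 U2"
    using H K1 K2 dj unfolding Hausdorff_space_compact_sets
    by (metis compactin_euclidean_iff open_openin disjnt_def)
  obtain V1 L1 and g1 :: "'a \<Rightarrow> real" where g1: "open V1" "compact L1" "K1 \<subseteq> V1" "V1 \<subseteq> L1" "L1 \<subseteq> U1"
    "g1 \<in> Cc" "\<And>x. 0 \<le> g1 x" "\<And>x. g1 x \<le> 1" "\<And>x. x \<in> K1 \<Longrightarrow> g1 x = 1"
    "\<And>x. g1 x \<noteq> 0 \<Longrightarrow> x \<in> V1"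
    by (rule urysohn_Cc[OF LC K1 U(1,3)]) blast
  obtain V2 L2 and g2 :: "'a \<Rightarrow> real" where g2: "open V2" "compact L2" "K2 \<subseteq> V2" "V2 \<subseteq> L2" "L2 \<subseteq> U2"
    "g2 \<in> Cc" "\<And>x. 0 \<le> g2 x" "\<And>x. g2 x \<le> 1" "\<And>x. x \<in> K2 \<Longrightarrow> g2 x = 1"
    "\<And>x. g2 x \<noteq> 0 \<Longrightarrow> x \<in> V2"
    by (rule urysohn_Cc[OF LC K2 U(2,4)]) blast
  have dg: "\<And>x. g1 x = 0 \<or> g2 x = 0"
  proof -
    fix x show "g1 x = 0 \<or> g2 x = 0"
    proof (rule ccontr)
      assume "\<not> (g1 x = 0 \<or> g2 x = 0)"
      then have "x \<in> U1" "x \<in> U2" using g1(4,5,10) g2(4,5,10) by blast+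
      then show False using U(5) by (auto simp: disjnt_def)
    qed
  qed
  have cK: "compact (K1 \<union> K2)" using K1 K2 by auto
  have key: "\<zeta> (\<lambda>x. min (f1 x) (g1 x) + min (f2 x) (g2 x)) = \<zeta> (\<lambda>x. min (f1 x) (g1 x)) + \<zeta> (\<lambda>x. min (f2 x) (g2 x))"
    if "f1 \<in> Cc" "f2 \<in> Cc" "\<And>x. 0 \<le> f1 x" "\<And>x. 0 \<le> f2 x" for f1 f2
  proof (rule Zdisj[OF QI])
    show "(\<lambda>x. min (f1 x) (g1 x)) \<in> Cc" by (rule Cc_min[OF that(1) g1(6)])
    show "(\<lambda>x. min (f2 x) (g2 x)) \<in> Cc" by (rule Cc_min[OF that(2) g2(6)])
    show "\<And>x. 0 \<le> min (f1 x) (g1 x)" using that g1(7) by simp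
    show "\<And>x. 0 \<le> min (f2 x) (g2 x)" using that g2(7) by simp
    show "\<And>x. min (f1 x) (g1 x) = 0 \<or> min (f2 x) (g2 x) = 0"
      using dg that g1(7) g2(7) by (metis min.absorb_iff2 min.commute)
  qed
  show ?thesis
  proof (rule antisym)
    have A: "lam \<zeta> (K1 \<union> K2) \<le> \<zeta> f1 + \<zeta> f2"
      if f1: "f1 \<in> Cc" "indicator K1 \<le> f1" and f2: "f2 \<in> Cc" "indicator K2 \<le> f2" for f1 f2
    proof -
      have p1: "\<And>x. 0 \<le> f1 x" "\<And>x. x \<in> K1 \<Longrightarrow> 1 \<le> f1 x" using f1(2) unfolding ind_le_iff by auto
      have p2: "\<And>x. 0 \<le> f2 x" "\<And>x. x \<in> K2 \<Longrightarrow> 1 \<le> f2 x" using f2(2) unfolding ind_le_iff by auto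
      have hC: "(\<lambda>x. min (f1 x) (g1 x) + min (f2 x) (g2 x)) \<in> Cc"
        by (intro Cc_add Cc_min f1(1) f2(1) g1(6) g2(6))
      have "indicator (K1 \<union> K2) \<le> (\<lambda>x. min (f1 x) (g1 x) + min (f2 x) (g2 x))"
        unfolding ind_le_iff
      proof (intro conjI allI ballI)
        fix x show "0 \<le> min (f1 x) (g1 x) + min (f2 x) (g2 x)" using p1 p2 g1(7) g2(7) by simp
      next
        fix x assume "x \<in> K1 \<union> K2"
        then show "1 \<le> min (f1 x) (g1 x) + min (f2 x) (g2 x)"
        proof
          assume x: "x \<in> K1"
          then show ?thesis using p1(2)[OF x] g1(9)[OF x] p2(1)[of x] g2(7)[of x] by simp
        next
          assume x: "x \<in> K2"
          then show ?thesis using p2(2)[OF x] g2(9)[OF x] p1(1)[of x] g1(7)[of x] by simp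
        qed
      qed
      then have "lam \<zeta> (K1 \<union> K2) \<le> \<zeta> (\<lambda>x. min (f1 x) (g1 x) + min (f2 x) (g2 x))"
        by (rule lam_lower[OF QI hC])
      also have "\<dots> = \<zeta> (\<lambda>x. min (f1 x) (g1 x)) + \<zeta> (\<lambda>x. min (f2 x) (g2 x))"
        by (rule key[OF f1(1) f2(1) p1(1) p2(1)])
      also have "\<dots> \<le> \<zeta> f1 + \<zeta> f2"
        using Zmono[OF QI Cc_min[OF f1(1) g1(6)] f1(1)] Zmono[OF QI Cc_min[OF f2(1) g2(6)] f2(1)]
        by (simp add: add_mono)
      finally show ?thesis .
    qed
    have ex1: "\<exists>f\<in>Cc. indicator K1 \<le> f" using cover_Cc[OF QI LC K1] by blast
    have ex2: "\<exists>f\<in>Cc. indicator K2 \<le> f" using cover_Cc[OF QI LC K2] by blast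
    have "lam \<zeta> (K1 \<union> K2) - lam \<zeta> K1 \<le> \<zeta> f2" if f2: "f2 \<in> Cc" "indicator K2 \<le> f2" for f2
    proof -
      have "lam \<zeta> (K1 \<union> K2) - \<zeta> f2 \<le> lam \<zeta> K1"
        by (rule lam_greatest[OF QI _ ex1]) (use A f2 in force)
      then show ?thesis by linarith
    qed
    then have "lam \<zeta> (K1 \<union> K2) - lam \<zeta> K1 \<le> lam \<zeta> K2"
      by (rule lam_greatest[OF QI _ ex2])
    then show "lam \<zeta> (K1 \<union> K2) \<le> lam \<zeta> K1 + lam \<zeta> K2" by linarith
  next
    have exU: "\<exists>f\<in>Cc. indicator (K1 \<union> K2) \<le> f" using cover_Cc[OF QI LC cK] by blast
    show "lam \<zeta> K1 + lam \<zeta> K2 \<le> lam \<zeta> (K1 \<union> K2)"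
    proof (rule lam_greatest[OF QI _ exU])
      fix f assume f: "f \<in> Cc" "indicator (K1 \<union> K2) \<le> f"
      have p: "\<And>x. 0 \<le> f x" "\<And>x. x \<in> K1 \<union> K2 \<Longrightarrow> 1 \<le> f x" using f(2) unfolding ind_le_iff by auto
      have h1: "(\<lambda>x. min (f x) (g1 x)) \<in> Cc" by (rule Cc_min[OF f(1) g1(6)])
      have h2: "(\<lambda>x. min (f x) (g2 x)) \<in> Cc" by (rule Cc_min[OF f(1) g2(6)])
      have "lam \<zeta> K1 \<le> \<zeta> (\<lambda>x. min (f x) (g1 x))"
        by (rule lam_lower[OF QI h1]) (use p g1(7,9) in \<open>auto simp: ind_le_iff\<close>)
      moreover have "lam \<zeta> K2 \<le> \<zeta> (\<lambda>x. min (f x) (g2 x))"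
        by (rule lam_lower[OF QI h2]) (use p g2(7,9) in \<open>auto simp: ind_le_iff\<close>)
      moreover have "\<zeta> (\<lambda>x. min (f x) (g1 x) + min (f x) (g2 x)) = \<zeta> (\<lambda>x. min (f x) (g1 x)) + \<zeta> (\<lambda>x. min (f x) (g2 x))"
        by (rule key[OF f(1) f(1) p(1) p(1)])
      moreover have "\<zeta> (\<lambda>x. min (f x) (g1 x) + min (f x) (g2 x)) \<le> \<zeta> f"
      proof (rule Zmono[OF QI Cc_add[OF h1 h2] f(1)])
        fix x show "min (f x) (g1 x) + min (f x) (g2 x) \<le> f x"
          using dg[of x] p(1)[of x] by auto
      qed
      ultimately show "lam \<zeta> K1 + lam \<zeta> K2 \<le> \<zeta> f" by linarith
    qed
  qed
qed

end

lemma eps_le: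
  fixes x y c :: real
  assumes "\<And>t. 0 < t \<Longrightarrow> x \<le> y + t * c" "0 \<le> c"
  shows "x \<le> y"
proof (rule field_le_epsilon)
  fix e :: real assume e: "0 < e"
  have t: "0 < e / (c + 1)" using e assms(2) by simp
  have "e / (c + 1) * c \<le> e"
  proof -
    have "e / (c + 1) * c = e * (c / (c + 1))" by simp
    also have "\<dots> \<le> e * 1" using e assms(2) by (intro mult_left_mono) auto
    finally show ?thesis by simp
  qed
  then show "x \<le> y + e" using assms(1)[OF t] by linarith
qed

lemma closure_sub_compact: "U \<subseteq> L \<Longrightarrow> compact L \<Longrightarrow> compact (closure (U :: 'a::t2_space set))"
  by (metis closed_closure closure_minimal compact_Int_closed compact_imp_closed inf.absorb_iff2)

context
  fixes \<zeta> :: "('a::t2_space \<Rightarrow> real) \<Rightarrow> real"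
  assumes QI: "quasi_integral \<zeta>"
    and LC: "locally_compact_space (euclidean::'a topology)"
begin

lemma level_compact:
  assumes f: "f \<in> Cc" and e: "0 < e"
  shows "compact {x. e \<le> f x}"
proof -
  have cl: "closed {x. e \<le> f x}"
    by (rule closed_Collect_le) (use Cc_cont[OF f] in auto)
  have "{x. e \<le> f x} \<subseteq> tsupp f" using e nz_in_tsupp[of f] by force
  then show ?thesis using compact_Int_closed[OF Cc_compact[OF f] cl] by (simp add: inf.absorb_iff2)
qed

lemma mu_inner:
  assumes U: "U \<in> OX"
  shows "mu \<zeta> U = Sup {lam \<zeta> K | K. compact K \<and> K \<subseteq> U}"
proof -
  have oU: "open U" and D: "compact (closure U)" using U by (auto simp: OX_def)
  have UD: "U \<subseteq> closure U" by (rule closure_subset)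
  let ?S = "{lam \<zeta> K | K. compact K \<and> K \<subseteq> U}"
  have ne: "?S \<noteq> {}" by blast
  have bdd: "bdd_above ?S"
    by (rule bdd_aboveI[of _ "mu \<zeta> U"]) (use lam_le_mu[OF QI LC _ oU _ D UD] in auto)
  show ?thesis
  proof (rule antisym)
    show "mu \<zeta> U \<le> Sup ?S"
    proof (rule mu_least[OF QI])
      fix f assume f: "f \<in> Cc" "f \<le> indicator U"
      have pf: "\<And>x. f x \<le> 1" "\<And>x. x \<notin> U \<Longrightarrow> f x \<le> 0" using f(2) unfolding ind_ge_iff by auto
      obtain V L and e :: "'a \<Rightarrow> real" where e: "open V" "compact L" "tsupp f \<subseteq> V" "V \<subseteq> L" "L \<subseteq> UNIV"
        "e \<in> Cc" "\<And>x. 0 \<le> e x" "\<And>x. e x \<le> 1" "\<And>x. x \<in> tsupp f \<Longrightarrow> e x = 1"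
        "\<And>x. e x \<noteq> 0 \<Longrightarrow> x \<in> V"
        by (rule urysohn_Cc[OF LC Cc_compact[OF f(1)] open_UNIV subset_UNIV]) blast
      have c0: "0 \<le> \<zeta> e" by (rule Znonneg[OF QI e(6) e(7)])
      have cmax: "continuous_on UNIV (\<lambda>t::real. max t 0)"
        by (intro continuous_on_max continuous_on_id continuous_on_const)
      have fp: "(\<lambda>x. max (f x) 0) \<in> Cc" by (rule Cc_comp[OF f(1) cmax]) simp
      have s1: "\<zeta> f \<le> \<zeta> (\<lambda>x. max (f x) 0)" by (rule Zmono[OF QI f(1) fp]) simp
      have "\<zeta> f \<le> Sup ?S + t * \<zeta> e" if t: "0 < t" for t
      proof -
        define K where "K = {x. t \<le> f x}"
        have cK: "compact K" unfolding K_def by (rule level_compact[OF f(1) t])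
        have KU: "K \<subseteq> U" unfolding K_def using pf(2) t by force
        have c1: "continuous_on UNIV (\<lambda>s::real. max (s - t) 0)"
          by (intro continuous_on_max continuous_on_diff continuous_on_id continuous_on_const)
        have c2: "continuous_on UNIV (\<lambda>s::real. min (max s 0) t)"
          by (intro continuous_on_min continuous_on_max continuous_on_id continuous_on_const)
        have eq: "(\<lambda>x. max (f x) 0) = (\<lambda>x. max (f x - t) 0 + min (max (f x) 0) t)"
          by (rule ext) (use t in \<open>auto simp: max_def min_def\<close>)
        have Zs: "\<zeta> (\<lambda>x. max (f x) 0) = \<zeta> (\<lambda>x. max (f x - t) 0) + \<zeta> (\<lambda>x. min (max (f x) 0) t)"
          unfolding eq by (rule Zsum[OF QI f(1) c1 _ c2]) (use t in auto)
        have pC: "(\<lambda>x. max (f x - t) 0) \<in> Cc" by (rule Cc_comp[OF f(1) c1]) (use t in auto)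
        have qC: "(\<lambda>x. min (max (f x) 0) t) \<in> Cc" by (rule Cc_comp[OF f(1) c2]) (use t in auto)
        have "\<zeta> (\<lambda>x. min (max (f x) 0) t) \<le> \<zeta> (\<lambda>x. t * e x)"
        proof (rule Zmono[OF QI qC Cc_scale[OF e(6)]])
          fix x show "min (max (f x) 0) t \<le> t * e x"
          proof (cases "f x = 0")
            case True then show ?thesis using t e(7)[of x] by simp
          next
            case False then have "e x = 1" using e(9) nz_in_tsupp by blast
            then show ?thesis by simp
          qed
        qed
        also have "\<dots> = t * \<zeta> e" by (rule Zhom[OF QI e(6)])
        finally have q: "\<zeta> (\<lambda>x. min (max (f x) 0) t) \<le> t * \<zeta> e" .
        have exK: "\<exists>g\<in>Cc. indicator K \<le> g" using cover_Cc[OF QI LC cK] by blast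
        have "\<zeta> (\<lambda>x. max (f x - t) 0) \<le> lam \<zeta> K"
        proof (rule lam_greatest[OF QI _ exK])
          fix g assume g: "g \<in> Cc" "indicator K \<le> g"
          have pg: "\<And>x. 0 \<le> g x" "\<And>x. x \<in> K \<Longrightarrow> 1 \<le> g x" using g(2) unfolding ind_le_iff by auto
          show "\<zeta> (\<lambda>x. max (f x - t) 0) \<le> \<zeta> g"
          proof (rule Zmono[OF QI pC g(1)])
            fix x show "max (f x - t) 0 \<le> g x"
            proof (cases "x \<in> K")
              case True then show ?thesis using pg[of x] pf(1)[of x] t by simp
            next
              case False then show ?thesis using pg(1)[of x] by (simp add: K_def)
            qed
          qed
        qed
        also have "lam \<zeta> K \<le> Sup ?S" by (rule cSup_upper[OF _ bdd]) (use cK KU in blast)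
        finally show ?thesis using s1 Zs q by linarith
      qed
      then show "\<zeta> f \<le> Sup ?S" by (rule eps_le[OF _ c0])
    qed
  next
    show "Sup ?S \<le> mu \<zeta> U"
      by (rule cSup_least[OF ne]) (use lam_le_mu[OF QI LC _ oU _ D UD] in auto)
  qed
qed

end

context
  fixes \<zeta> :: "('a::t2_space \<Rightarrow> real) \<Rightarrow> real"
  assumes QI: "quasi_integral \<zeta>"
    and LC: "locally_compact_space (euclidean::'a topology)"
begin

lemma OX_nbhd:
  fixes K :: "'a set"
  assumes K: "compact K"
  shows "\<exists>V. V \<in> OX \<and> K \<subseteq> V"
proof -
  obtain V L and g :: "'a \<Rightarrow> real" where e: "open V" "compact L" "K \<subseteq> V" "V \<subseteq> L" "L \<subseteq> UNIV"
    "g \<in> Cc" "\<And>x. 0 \<le> g x" "\<And>x. g x \<le> 1" "\<And>x. x \<in> K \<Longrightarrow> g x = 1"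
    "\<And>x. g x \<noteq> 0 \<Longrightarrow> x \<in> V"
    by (rule urysohn_Cc[OF LC K open_UNIV subset_UNIV]) blast
  then show ?thesis using closure_sub_compact[OF e(4) e(2)] unfolding OX_def by blast
qed

lemma lam_outer:
  fixes K :: "'a set"
  assumes K: "compact K"
  shows "lam \<zeta> K = Inf {mu \<zeta> U | U. U \<in> OX \<and> K \<subseteq> U}"
proof -
  let ?T = "{mu \<zeta> U | U. U \<in> OX \<and> K \<subseteq> U}"
  have ne: "?T \<noteq> {}" using OX_nbhd[OF K] by blast
  have lo: "lam \<zeta> K \<le> mu \<zeta> U" if "U \<in> OX" "K \<subseteq> U" for U
    using that lam_le_mu[OF QI LC K _ _ _ closure_subset] unfolding OX_def by blast
  have bdd: "bdd_below ?T" by (rule bdd_belowI[of _ "lam \<zeta> K"]) (use lo in auto)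
  show ?thesis
  proof (rule antisym)
    show "lam \<zeta> K \<le> Inf ?T" by (rule cInf_greatest[OF ne]) (use lo in auto)
  next
    have exK: "\<exists>g\<in>Cc. indicator K \<le> g" using cover_Cc[OF QI LC K] by blast
    show "Inf ?T \<le> lam \<zeta> K"
    proof (rule lam_greatest[OF QI _ exK])
      fix f assume f: "f \<in> Cc" "indicator K \<le> f"
      have pf: "\<And>x. 0 \<le> f x" "\<And>x. x \<in> K \<Longrightarrow> 1 \<le> f x" using f(2) unfolding ind_le_iff by auto
      have c0: "0 \<le> \<zeta> f" by (rule Znonneg[OF QI f(1) pf(1)])
      have "Inf ?T \<le> \<zeta> f + t * \<zeta> f" if t: "0 < t" for t
      proof -
        define U where "U = {x. 1 < (1 + t) * f x}"
        have oU: "open U" unfolding U_def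
          by (rule open_Collect_less) (use Cc_cont[OF f(1)] in \<open>auto intro: continuous_on_mult_left\<close>)
        have "closure U \<subseteq> {x. 1 / (1 + t) \<le> f x}"
        proof (rule closure_minimal)
          show "U \<subseteq> {x. 1 / (1 + t) \<le> f x}" unfolding U_def using t
            by (auto simp: field_simps)
          show "closed {x. 1 / (1 + t) \<le> f x}"
            by (rule closed_Collect_le) (use Cc_cont[OF f(1)] in auto)
        qed
        moreover have "compact {x. 1 / (1 + t) \<le> f x}" by (rule level_compact[OF QI LC f(1)]) (use t in simp)
        ultimately have cU: "compact (closure U)"
          by (metis closed_closure compact_Int_closed inf.absorb_iff2)
        have UO: "U \<in> OX" using oU cU by (simp add: OX_def)
        have KU: "K \<subseteq> U"
        proof
          fix x assume "x \<in> K"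
          then have "1 \<le> f x" by (rule pf(2))
          then have "1 * 1 < (1 + t) * f x" using t by (intro mult_less_le_imp_less) auto
          then show "x \<in> U" by (simp add: U_def)
        qed
        have "mu \<zeta> U \<le> (1 + t) * \<zeta> f"
        proof (rule mu_least[OF QI])
          fix g assume g: "g \<in> Cc" "g \<le> indicator U"
          have pg: "\<And>x. g x \<le> 1" "\<And>x. x \<notin> U \<Longrightarrow> g x \<le> 0" using g(2) unfolding ind_ge_iff by auto
          have "\<zeta> g \<le> \<zeta> (\<lambda>x. (1 + t) * f x)"
          proof (rule Zmono[OF QI g(1) Cc_scale[OF f(1)]])
            fix x show "g x \<le> (1 + t) * f x"
            proof (cases "x \<in> U")
              case True then show ?thesis using pg(1)[of x] by (simp add: U_def)
            next
              case False
              have "0 \<le> (1 + t) * f x" using pf(1)[of x] t by simp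
              then show ?thesis using pg(2)[OF False] by linarith
            qed
          qed
          then show "\<zeta> g \<le> (1 + t) * \<zeta> f" using Zhom[OF QI f(1)] by simp
        qed
        moreover have "Inf ?T \<le> mu \<zeta> U" by (rule cInf_lower[OF _ bdd]) (use UO KU in blast)
        ultimately show ?thesis by (simp add: algebra_simps)
      qed
      then show "Inf ?T \<le> \<zeta> f" by (rule eps_le[OF _ c0])
    qed
  qed
qed

end

lemma OX_sub: "W \<in> OX \<Longrightarrow> open U \<Longrightarrow> U \<subseteq> W \<Longrightarrow> U \<in> (OX :: 'a::t2_space set set)"
  unfolding OX_def using closure_sub_compact[of U "closure W"] closure_subset[of W] by auto

context
  fixes \<zeta> :: "('a::t2_space \<Rightarrow> real) \<Rightarrow> real"
  assumes QI: "quasi_integral \<zeta>"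
    and LC: "locally_compact_space (euclidean::'a topology)"
begin

lemma mu_le_via_inner:
  assumes U: "U \<in> OX" and b: "\<And>L. compact L \<Longrightarrow> L \<subseteq> U \<Longrightarrow> lam \<zeta> L \<le> c"
  shows "mu \<zeta> U \<le> c"
  unfolding mu_inner[OF QI LC U] by (rule cSup_least) (use b in auto)

lemma lam_le_mu_OX: "U \<in> OX \<Longrightarrow> compact L \<Longrightarrow> L \<subseteq> U \<Longrightarrow> lam \<zeta> L \<le> mu \<zeta> U"
  unfolding OX_def using lam_le_mu[OF QI LC _ _ _ _ closure_subset] by blast

lemma mu_add:
  assumes o1: "open U1" and o2: "open U2" and dj: "U1 \<inter> U2 = {}" and W: "U1 \<union> U2 \<in> OX"
  shows "mu \<zeta> (U1 \<union> U2) = mu \<zeta> U1 + mu \<zeta> U2"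
proof -
  have O1: "U1 \<in> OX" by (rule OX_sub[OF W o1]) auto
  have O2: "U2 \<in> OX" by (rule OX_sub[OF W o2]) auto
  show ?thesis
  proof (rule antisym)
    show "mu \<zeta> (U1 \<union> U2) \<le> mu \<zeta> U1 + mu \<zeta> U2"
    proof (rule mu_le_via_inner[OF W])
      fix M assume M: "compact M" "M \<subseteq> U1 \<union> U2"
      have c1: "compact (M - U2)" using M o2 by (simp add: compact_diff)
      have c2: "compact (M - U1)" using M o1 by (simp add: compact_diff)
      have eq: "M = (M - U2) \<union> (M - U1)" using M dj by blast
      have "lam \<zeta> M = lam \<zeta> (M - U2) + lam \<zeta> (M - U1)"
        by (subst eq, rule lam_add[OF QI LC c1 c2]) (use M in blast)
      moreover have "lam \<zeta> (M - U2) \<le> mu \<zeta> U1" by (rule lam_le_mu_OX[OF O1 c1]) (use M in blast)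
      moreover have "lam \<zeta> (M - U1) \<le> mu \<zeta> U2" by (rule lam_le_mu_OX[OF O2 c2]) (use M in blast)
      ultimately show "lam \<zeta> M \<le> mu \<zeta> U1 + mu \<zeta> U2" by linarith
    qed
  next
    have "mu \<zeta> U1 \<le> mu \<zeta> (U1 \<union> U2) - mu \<zeta> U2"
    proof (rule mu_le_via_inner[OF O1])
      fix L1 assume L1: "compact L1" "L1 \<subseteq> U1"
      have "mu \<zeta> U2 \<le> mu \<zeta> (U1 \<union> U2) - lam \<zeta> L1"
      proof (rule mu_le_via_inner[OF O2])
        fix L2 assume L2: "compact L2" "L2 \<subseteq> U2"
        have "lam \<zeta> (L1 \<union> L2) = lam \<zeta> L1 + lam \<zeta> L2"
          by (rule lam_add[OF QI LC L1(1) L2(1)]) (use L1 L2 dj in blast)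
        moreover have "lam \<zeta> (L1 \<union> L2) \<le> mu \<zeta> (U1 \<union> U2)"
          by (rule lam_le_mu_OX[OF W]) (use L1 L2 in auto)
        ultimately show "lam \<zeta> L2 \<le> mu \<zeta> (U1 \<union> U2) - lam \<zeta> L1" by linarith
      qed
      then show "lam \<zeta> L1 \<le> mu \<zeta> (U1 \<union> U2) - mu \<zeta> U2" by linarith
    qed
    then show "mu \<zeta> U1 + mu \<zeta> U2 \<le> mu \<zeta> (U1 \<union> U2)" by linarith
  qed
qed

end

context
  fixes \<zeta> :: "('a::t2_space \<Rightarrow> real) \<Rightarrow> real"
  assumes QI: "quasi_integral \<zeta>"
    and LC: "locally_compact_space (euclidean::'a topology)"
begin

lemma gen_bound:
  assumes K: "compact K" and M: "compact M" and KM: "K \<subseteq> M" and W: "open W" "M \<subseteq> W"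
    and cW: "compact (closure W)"
  shows "lam \<zeta> M \<le> lam \<zeta> K + mu \<zeta> (W - K)"
proof -
  obtain V L and g :: "'a \<Rightarrow> real" where g: "open V" "compact L" "M \<subseteq> V" "V \<subseteq> L" "L \<subseteq> W"
    "g \<in> Cc" "\<And>x. 0 \<le> g x" "\<And>x. g x \<le> 1" "\<And>x. x \<in> M \<Longrightarrow> g x = 1"
    "\<And>x. g x \<noteq> 0 \<Longrightarrow> x \<in> V"
    by (rule urysohn_Cc[OF LC M W]) blast
  have WK: "W - K \<subseteq> closure W" using closure_subset by blast
  have main: "lam \<zeta> M \<le> \<zeta> f + mu \<zeta> (W - K)" if f: "f \<in> Cc" "indicator K \<le> f" for f
  proof -
    have pf: "\<And>x. 0 \<le> f x" "\<And>x. x \<in> K \<Longrightarrow> 1 \<le> f x" using f(2) unfolding ind_le_iff by auto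
    have c0: "0 \<le> \<zeta> f" by (rule Znonneg[OF QI f(1) pf(1)])
    define k where "k = (\<lambda>x. g x + min (f x) (g x))"
    have kC: "k \<in> Cc" unfolding k_def by (intro Cc_add Cc_min g(6) f(1))
    have kM: "\<And>x. x \<in> M \<Longrightarrow> 1 \<le> k x" unfolding k_def using g(9) pf(1) by simp
    have kK: "\<And>x. x \<in> K \<Longrightarrow> k x = 2" unfolding k_def using g(9) pf(2) KM by force
    have kW: "\<And>x. x \<notin> W \<Longrightarrow> k x = 0"
    proof -
      fix x assume "x \<notin> W"
      then have "g x = 0" using g(10)[of x] g(4,5) by blast
      then show "k x = 0" unfolding k_def using pf(1)[of x] by simp
    qed
    have k0: "\<And>x. 0 \<le> k x" unfolding k_def using g(7) pf(1) by simp
    have kf: "\<And>x. k x \<le> 1 + f x"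
    proof -
      fix x show "k x \<le> 1 + f x" unfolding k_def using g(8)[of x]
        by (cases "f x \<le> g x") (simp_all add: min_def)
    qed
    have "lam \<zeta> M \<le> \<zeta> f + mu \<zeta> (W - K) + t * \<zeta> f" if t: "0 < t" for t
    proof -
      define d where "d = t / (1 + t)"
      have d0: "0 < d" "d < 1" using t by (auto simp: d_def)
      have d1: "1 - d = 1 / (1 + t)" using t by (simp add: d_def field_simps)
      define a where "a = (\<lambda>s::real. min (max s 0) 1)"
      define b where "b = (\<lambda>s::real. min (max ((s - (2 - d)) * (1 / d)) 0) 1)"
      define c where "c = (\<lambda>s::real. a s - b s)"
      have ca: "continuous_on UNIV a" unfolding a_def
        by (intro continuous_on_min continuous_on_max continuous_on_id continuous_on_const)
      have cb: "continuous_on UNIV b" unfolding b_def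
        by (intro continuous_on_min continuous_on_max continuous_on_mult_right continuous_on_diff
            continuous_on_id continuous_on_const)
      have cc: "continuous_on UNIV c" unfolding c_def using ca cb by (rule continuous_on_diff)
      have b0: "b 0 = 0" unfolding b_def using d0 by (simp add: field_simps)
      have a0: "a 0 = 0" unfolding a_def by simp
      have c0': "c 0 = 0" unfolding c_def using a0 b0 by simp
      have aC: "(\<lambda>x. a (k x)) \<in> Cc" by (rule Cc_comp[OF kC ca a0])
      have bC: "(\<lambda>x. b (k x)) \<in> Cc" by (rule Cc_comp[OF kC cb b0])
      have cC: "(\<lambda>x. c (k x)) \<in> Cc" by (rule Cc_comp[OF kC cc c0'])
      have eq: "(\<lambda>x. a (k x)) = (\<lambda>x. b (k x) + c (k x))" by (simp add: c_def)
      have split: "\<zeta> (\<lambda>x. a (k x)) = \<zeta> (\<lambda>x. b (k x)) + \<zeta> (\<lambda>x. c (k x))"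
        unfolding eq by (rule Zsum[OF QI kC cb b0 cc c0'])
      have "lam \<zeta> M \<le> \<zeta> (\<lambda>x. a (k x))"
      proof (rule lam_lower[OF QI aC])
        show "indicator M \<le> (\<lambda>x. a (k x))" unfolding ind_le_iff
          using kM by (auto simp: a_def intro: le_max_iff_disj[THEN iffD2])
      qed
      moreover have "\<zeta> (\<lambda>x. b (k x)) \<le> (1 + t) * \<zeta> f"
      proof -
        have "\<zeta> (\<lambda>x. b (k x)) \<le> \<zeta> (\<lambda>x. (1 + t) * f x)"
        proof (rule Zmono[OF QI bC Cc_scale[OF f(1)]])
          fix x
          show "b (k x) \<le> (1 + t) * f x"
          proof (cases "k x \<le> 2 - d")
            case True
            then have "(k x - (2 - d)) / d \<le> 0" using d0 by (simp add: divide_nonpos_pos)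
            then have "b (k x) = 0" unfolding b_def by simp
            then show ?thesis using pf(1)[of x] t by simp
          next
            case False
            then have "1 - d < f x" using kf[of x] by linarith
            then have "1 < (1 + t) * f x" using t unfolding d1 by (simp add: field_simps)
            moreover have "b (k x) \<le> 1" unfolding b_def by simp
            ultimately show ?thesis by linarith
          qed
        qed
        then show ?thesis using Zhom[OF QI f(1)] by simp
      qed
      moreover have "\<zeta> (\<lambda>x. c (k x)) \<le> mu \<zeta> (W - K)"
      proof (rule mu_upper'[OF QI LC cW WK cC])
        show "(\<lambda>x. c (k x)) \<le> indicator (W - K)" unfolding ind_ge_iff
        proof (intro conjI allI impI)
          fix x show "c (k x) \<le> 1" unfolding c_def a_def b_def by simp
        next
          fix x assume "x \<notin> W - K"
          then consider "x \<notin> W" | "x \<in> K" by blast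
          then show "c (k x) \<le> 0"
          proof cases
            case 1 then show ?thesis using kW[OF 1] c0' by simp
          next
            case 2 then show ?thesis using kK[OF 2] d0 unfolding c_def a_def b_def by simp
          qed
        qed
      qed
      ultimately show ?thesis using split by (simp add: algebra_simps)
    qed
    then show ?thesis by (rule eps_le[OF _ c0])
  qed
  have exK: "\<exists>g\<in>Cc. indicator K \<le> g" using cover_Cc[OF QI LC K] by blast
  have "lam \<zeta> M - mu \<zeta> (W - K) \<le> lam \<zeta> K"
    by (rule lam_greatest[OF QI _ exK]) (use main in force)
  then show ?thesis by linarith
qed

end

context
  fixes \<zeta> :: "('a::t2_space \<Rightarrow> real) \<Rightarrow> real"
  assumes QI: "quasi_integral \<zeta>"
    and LC: "locally_compact_space (euclidean::'a topology)"
begin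

lemma mixed_open:
  assumes K: "compact K" and U: "open U" and dj: "K \<inter> U = {}" and W: "K \<union> U \<in> OX"
  shows "mu \<zeta> (K \<union> U) = lam \<zeta> K + mu \<zeta> U"
proof -
  have OU: "U \<in> OX" by (rule OX_sub[OF W U]) auto
  have oW: "open (K \<union> U)" and cW: "compact (closure (K \<union> U))" using W by (auto simp: OX_def)
  show ?thesis
  proof (rule antisym)
    show "mu \<zeta> (K \<union> U) \<le> lam \<zeta> K + mu \<zeta> U"
    proof (rule mu_le_via_inner[OF QI LC W])
      fix M assume M: "compact M" "M \<subseteq> K \<union> U"
      have cMK: "compact (M \<union> K)" using M K by auto
      have "lam \<zeta> M \<le> lam \<zeta> (M \<union> K)" by (rule lam_mono[OF QI LC cMK]) auto
      also have "\<dots> \<le> lam \<zeta> K + mu \<zeta> ((K \<union> U) - K)"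
        by (rule gen_bound[OF QI LC K cMK _ oW _ cW]) (use M in auto)
      also have "(K \<union> U) - K = U" using dj by blast
      finally show "lam \<zeta> M \<le> lam \<zeta> K + mu \<zeta> U" .
    qed
  next
    have "mu \<zeta> U \<le> mu \<zeta> (K \<union> U) - lam \<zeta> K"
    proof (rule mu_le_via_inner[OF QI LC OU])
      fix L assume L: "compact L" "L \<subseteq> U"
      have "lam \<zeta> (K \<union> L) = lam \<zeta> K + lam \<zeta> L"
        by (rule lam_add[OF QI LC K L(1)]) (use L dj in blast)
      moreover have "lam \<zeta> (K \<union> L) \<le> mu \<zeta> (K \<union> U)"
        by (rule lam_le_mu_OX[OF QI LC W]) (use L K in auto)
      ultimately show "lam \<zeta> L \<le> mu \<zeta> (K \<union> U) - lam \<zeta> K" by linarith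
    qed
    then show "lam \<zeta> K + mu \<zeta> U \<le> mu \<zeta> (K \<union> U)" by linarith
  qed
qed

lemma mixed_compact:
  assumes K: "compact K" and U: "U \<in> OX" and dj: "K \<inter> U = {}" and C: "compact (K \<union> U)"
  shows "lam \<zeta> (K \<union> U) = lam \<zeta> K + mu \<zeta> U"
proof (rule antisym)
  have oU: "open U" using U by (simp add: OX_def)
  show "lam \<zeta> (K \<union> U) \<le> lam \<zeta> K + mu \<zeta> U"
  proof (rule field_le_epsilon)
    fix e :: real assume e: "0 < e"
    let ?T = "{mu \<zeta> W | W. W \<in> OX \<and> K \<union> U \<subseteq> W}"
    have ne: "?T \<noteq> {}" using OX_nbhd[OF QI LC C] by blast
    have "Inf ?T < lam \<zeta> (K \<union> U) + e" using lam_outer[OF QI LC C] e by simp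
    then obtain W where W: "W \<in> OX" "K \<union> U \<subseteq> W" "mu \<zeta> W < lam \<zeta> (K \<union> U) + e"
      using cInf_lessD[OF ne] by blast
    have oW: "open W" and cW: "compact (closure W)" using W(1) by (auto simp: OX_def)
    have clC: "closed (K \<union> U)" using C by (rule compact_imp_closed)
    have oWC: "open (W - (K \<union> U))" using oW clC by auto
    have eqW: "(K \<union> U) \<union> (W - (K \<union> U)) = W" using W(2) by blast
    have "mu \<zeta> W = lam \<zeta> (K \<union> U) + mu \<zeta> (W - (K \<union> U))"
      using mixed_open[OF C oWC _ ] eqW W(1) by auto
    then have small: "mu \<zeta> (W - (K \<union> U)) < e" using W(3) by linarith
    have "lam \<zeta> (K \<union> U) \<le> lam \<zeta> K + mu \<zeta> (W - K)"
      by (rule gen_bound[OF QI LC K C _ oW W(2) cW]) auto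
    also have "W - K = U \<union> (W - (K \<union> U))" using W(2) dj by blast
    also have "mu \<zeta> (U \<union> (W - (K \<union> U))) = mu \<zeta> U + mu \<zeta> (W - (K \<union> U))"
    proof (rule mu_add[OF QI LC oU oWC])
      show "U \<inter> (W - (K \<union> U)) = {}" by blast
      show "U \<union> (W - (K \<union> U)) \<in> OX" by (rule OX_sub[OF W(1)]) (use oU oWC W(2) in auto)
    qed
    finally show "lam \<zeta> (K \<union> U) \<le> lam \<zeta> K + mu \<zeta> U + e" using small by linarith
  qed
next
  have "mu \<zeta> U \<le> lam \<zeta> (K \<union> U) - lam \<zeta> K"
  proof (rule mu_le_via_inner[OF QI LC U])
    fix L assume L: "compact L" "L \<subseteq> U"
    have "lam \<zeta> (K \<union> L) = lam \<zeta> K + lam \<zeta> L"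
      by (rule lam_add[OF QI LC K L(1)]) (use L dj in blast)
    moreover have "lam \<zeta> (K \<union> L) \<le> lam \<zeta> (K \<union> U)"
      by (rule lam_mono[OF QI LC C]) (use L in auto)
    ultimately show "lam \<zeta> L \<le> lam \<zeta> (K \<union> U) - lam \<zeta> K" by linarith
  qed
  then show "lam \<zeta> K + mu \<zeta> U \<le> lam \<zeta> (K \<union> U)" by linarith
qed

end

theorem proposition2p4:
  fixes \<zeta> :: "('a::t2_space \<Rightarrow> real) \<Rightarrow> real"
  assumes "locally_compact_space (euclidean :: 'a topology)"
    and "quasi_integral \<zeta>"
  shows "topological_measure (tau_of \<zeta>)"
proof -
  note LC = assms(1) and QI = assms(2)
  have tK: "tau_of \<zeta> A = lam \<zeta> A" if "compact A" for A
    using that by (simp add: tau_of_eq)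
  have tO: "tau_of \<zeta> A = mu \<zeta> A" if "A \<in> OX" for A
  proof (cases "compact A")
    case True
    have "open A" using that by (simp add: OX_def)
    then show ?thesis using True lam_eq_mu_clopen[OF QI LC True] by (simp add: tau_of_eq)
  next
    case False then show ?thesis by (simp add: tau_of_eq)
  qed
  have AX: "A \<in> AX \<longleftrightarrow> compact A \<or> A \<in> OX" for A :: "'a set" by (simp add: AX_def)
  have OXc: "open A" "compact (closure A)" "A \<subseteq> closure A" if "A \<in> OX" for A :: "'a set"
    using that closure_subset by (auto simp: OX_def)
  have nonneg: "\<forall>A\<in>AX. 0 \<le> tau_of \<zeta> A"
  proof
    fix A :: "'a set" assume "A \<in> AX"
    then consider "compact A" | "A \<in> OX" unfolding AX by blast
    then show "0 \<le> tau_of \<zeta> A"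
    proof cases
      case 1 then show ?thesis using tK lam_nonneg'[OF QI LC] by simp
    next
      case 2 then show ?thesis using tO[OF 2] mu_nonneg'[OF QI LC OXc(2)[OF 2] OXc(3)[OF 2]] by simp
    qed
  qed
  have add_KO: "tau_of \<zeta> (A \<union> B) = tau_of \<zeta> A + tau_of \<zeta> B"
    if A: "compact A" and B: "B \<in> OX" and d: "A \<inter> B = {}" and AB: "A \<union> B \<in> AX" for A B
  proof -
    from AB consider "compact (A \<union> B)" | "A \<union> B \<in> OX" unfolding AX by blast
    then show ?thesis
    proof cases
      case 1 then show ?thesis using mixed_compact[OF QI LC A B d] tK[OF 1] tK[OF A] tO[OF B] by simp
    next
      case 2 then show ?thesis
        using mixed_open[OF QI LC A OXc(1)[OF B] d] tO[OF 2] tK[OF A] tO[OF B] by simp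
    qed
  qed
  have add: "\<forall>A\<in>AX. \<forall>A'\<in>AX. A \<inter> A' = {} \<longrightarrow> A \<union> A' \<in> AX \<longrightarrow>
      tau_of \<zeta> (A \<union> A') = tau_of \<zeta> A + tau_of \<zeta> A'"
  proof (intro ballI impI)
    fix A A' :: "'a set" assume A: "A \<in> AX" and A': "A' \<in> AX" and d: "A \<inter> A' = {}" and U: "A \<union> A' \<in> AX"
    show "tau_of \<zeta> (A \<union> A') = tau_of \<zeta> A + tau_of \<zeta> A'"
    proof (cases "compact A")
      case cA: True
      show ?thesis
      proof (cases "compact A'")
        case True
        have "compact (A \<union> A')" using cA True by auto
        then show ?thesis using lam_add[OF QI LC cA True d] tK cA True by simp
      next
        case False
        then have "A' \<in> OX" using A' unfolding AX by blast
        then show ?thesis using add_KO[OF cA _ d U] by simp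
      qed
    next
      case nA: False
      then have OA: "A \<in> OX" using A unfolding AX by blast
      show ?thesis
      proof (cases "compact A'")
        case True
        have "tau_of \<zeta> (A' \<union> A) = tau_of \<zeta> A' + tau_of \<zeta> A"
          by (rule add_KO[OF True OA]) (use d U in \<open>auto simp: Un_commute Int_commute\<close>)
        then show ?thesis by (simp add: Un_commute)
      next
        case False
        then have OA': "A' \<in> OX" using A' unfolding AX by blast
        have "A \<union> A' \<in> OX"
          using OXc[OF OA] OXc[OF OA'] by (auto simp: OX_def closure_Un)
        then show ?thesis using mu_add[OF QI LC OXc(1)[OF OA] OXc(1)[OF OA'] d] tO OA OA' by simp
      qed
    qed
  qed
  have mono: "\<forall>A\<in>AX. \<forall>A'\<in>AX. A \<subseteq> A' \<longrightarrow> tau_of \<zeta> A \<le> tau_of \<zeta> A'"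
  proof (intro ballI impI)
    fix A A' :: "'a set" assume A: "A \<in> AX" and A': "A' \<in> AX" and s: "A \<subseteq> A'"
    from A consider "compact A" | "A \<in> OX" unfolding AX by blast
    then show "tau_of \<zeta> A \<le> tau_of \<zeta> A'"
    proof cases
      case 1
      from A' consider "compact A'" | "A' \<in> OX" unfolding AX by blast
      then show ?thesis
      proof cases
        case 2 then show ?thesis using 1 tK tO lam_le_mu_OX[OF QI LC 2 1 s] by simp
      qed (use 1 tK lam_mono[OF QI LC _ s] in simp)
    next
      case 2
      from A' consider "compact A'" | "A' \<in> OX" unfolding AX by blast
      then show ?thesis
      proof cases
        case 1 then show ?thesis using 2 tK tO mu_le_lam[OF QI LC 1 s] by simp
      next
        case 3: 2
        then show ?thesis using 2 tO mu_mono[OF QI LC OXc(2)[OF 3] _ s] OXc(3)[OF 3] by simp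
      qed
    qed
  qed
  have r1: "\<forall>K. compact K \<longrightarrow> tau_of \<zeta> K = Inf {tau_of \<zeta> U | U. U \<in> OX \<and> K \<subseteq> U}"
  proof (intro allI impI)
    fix K :: "'a set" assume K: "compact K"
    have "{tau_of \<zeta> U | U. U \<in> OX \<and> K \<subseteq> U} = {mu \<zeta> U | U. U \<in> OX \<and> K \<subseteq> U}"
      using tO by force
    then show "tau_of \<zeta> K = Inf {tau_of \<zeta> U | U. U \<in> OX \<and> K \<subseteq> U}"
      using lam_outer[OF QI LC K] tK[OF K] by simp
  qed
  have r2: "\<forall>U\<in>OX. tau_of \<zeta> U = Sup {tau_of \<zeta> K | K. compact K \<and> K \<subseteq> U}"
  proof
    fix U :: "'a set" assume U: "U \<in> OX"
    have "{tau_of \<zeta> K | K. compact K \<and> K \<subseteq> U} = {lam \<zeta> K | K. compact K \<and> K \<subseteq> U}"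
      using tK by force
    then show "tau_of \<zeta> U = Sup {tau_of \<zeta> K | K. compact K \<and> K \<subseteq> U}"
      using mu_inner[OF QI LC U] tO[OF U] by simp
  qed
  show ?thesis unfolding topological_measure_def using nonneg add mono r1 r2 by blast
qed

end
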